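(* Suppose the GIP bounds satisfy, for all $t>0$ and $v_j\in V$, $l_{j,t}\le l_{\min,0}w^t\le\mathbf h_0^T(\mathbf W^t)_{:,j}\le h_{j,t}$, where $l_{\min,0}=\min_j l_{j,0}$, $w=\min_{(i,j):W_{ij}>0}W_{ij}$, $\mathbf h_0=(h_{j,0})_j$ and $(\mathbf W^t)_{:,j}$ is the $j$-th column of $\mathbf W^t$. Let $\gamma\in[0,1)$ with $\gamma>1-1/\rho(\mathbf W)$, let $k\in\{1,\dots,n\}$, and let $\mathbf c=\big((\mathbf I-(1-\gamma)\mathbf W)^{-1}-\mathbf I\big)\mathbf 1$ (the Katz centrality with factor $1-\gamma$). Consider the problem $$\max_{\mathbf x,\mathbf z}\ s(\mathbf x)\quad\text{s.t. } l_{j,0}z_j\le x_j\le h_{j,0}z_j\ \forall j,\ \ \sum_j z_j\le k,\ \ x_j\in\mathbb R,\ z_j\in\{0,1\},$$ where $s(\mathbf x)=\sum_j\sum_{t=1}^\infty(1-\gamma)^t x_j(t)$ with $(\mathbf x(t))$ the GIP trajectory from $\mathbf x(0)=\mathbf x$. Let $\mathcal A\subseteq\{1,\dots,n\}$ with $|\mathcal A|=k$ be such that $h_{i,0}c_i\le h_{j,0}c_j$ for all $i\notin\mathcal A$, $j\in\mathcal A$. Then $x^*_j=h_{j,0}$, $z^*_j=1$ for $j\in\mathcal A$ and $x^*_j=0$, $z^*_j=0$ for $j\notin\mathcal A$ is an optimal solution, and in this regime $s(\mathbf x)=\mathbf c^T\mathbf x$ for every feasible $\mathbf x$.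
   Context: Let $G=(V,E)$ be a directed weighted network with node set $V=\{v_1,\dots,v_n\}$ and weighted adjacency matrix $\mathbf W=(W_{ij})$, where $W_{ij}>0$ if $(v_i,v_j)\in E$ and $W_{ij}=0$ otherwise. The general information propagation (GIP) model with lower bounds $\{l_{j,t}\}$ and upper bounds $\{h_{j,t}\}$ (real numbers with $0\le l_{j,t}\le h_{j,t}$ for all $t\ge 0$, $v_j\in V$, and $l_{j,0}>0$) is the deterministic discrete-time dynamics $$x_j(t)=f_{j,t}\Big(\sum_i W_{ij}x_i(t-1)\Big),\quad t>0,\ v_j\in V,$$ where $f_{j,t}(x)=0$ if $x<l_{j,t}$, $f_{j,t}(x)=x$ if $l_{j,t}\le x<h_{j,t}$, and $f_{j,t}(x)=h_{j,t}$ if $x\ge h_{j,t}$. An initial state $\mathbf x(0)=(x_j(0))$ is admissible if $x_j(0)\in\{0\}\cup[l_{j,0},h_{j,0}]$ for every $j$. $\mathbf 1$ is the all-ones vector, $\mathbf I$ the identity. *)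

theory Defs
  imports "Jordan_Normal_Form.Spectral_Radius" "Jordan_Normal_Form.Gauss_Jordan_Elimination"
begin

text \<open>Nodes are 0..<n; a network is a real n x n weighted adjacency matrix W (W i j >= 0,
  with W i j > 0 exactly on the edges). Bounds l, h are indexed as l j t (node j, time t).\<close>

definition gip_f :: "real \<Rightarrow> real \<Rightarrow> real \<Rightarrow> real" where
  "gip_f lo hi x = (if x < lo then 0 else if x < hi then x else hi)"

fun gip_traj :: "real mat \<Rightarrow> (nat \<Rightarrow> nat \<Rightarrow> real) \<Rightarrow> (nat \<Rightarrow> nat \<Rightarrow> real)
    \<Rightarrow> (nat \<Rightarrow> real) \<Rightarrow> nat \<Rightarrow> nat \<Rightarrow> real" where
  "gip_traj W l h x0 0 = x0"
| "gip_traj W l h x0 (Suc t) =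
     (\<lambda>j. gip_f (l j (Suc t)) (h j (Suc t))
            (\<Sum>i<dim_row W. W $$ (i, j) * gip_traj W l h x0 t i))"

definition gip_score :: "real mat \<Rightarrow> (nat \<Rightarrow> nat \<Rightarrow> real) \<Rightarrow> (nat \<Rightarrow> nat \<Rightarrow> real)
    \<Rightarrow> real \<Rightarrow> (nat \<Rightarrow> real) \<Rightarrow> real" where
  "gip_score W l h \<gamma> x =
     (\<Sum>j<dim_row W. \<Sum>t. (1 - \<gamma>) ^ Suc t * gip_traj W l h x (Suc t) j)"

definition katz :: "real mat \<Rightarrow> real \<Rightarrow> real vec" where
  "katz W \<gamma> = (let n = dim_row W in
     (the (mat_inverse (1\<^sub>m n - (1 - \<gamma>) \<cdot>\<^sub>m W)) - 1\<^sub>m n) *\<^sub>v vec n (\<lambda>_. 1))"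

definition min_edge_weight :: "real mat \<Rightarrow> real" where
  "min_edge_weight W = Min {W $$ (i, j) | i j. i < dim_row W \<and> j < dim_col W \<and> W $$ (i, j) > 0}"

definition gip_feasible :: "nat \<Rightarrow> (nat \<Rightarrow> nat \<Rightarrow> real) \<Rightarrow> (nat \<Rightarrow> nat \<Rightarrow> real)
    \<Rightarrow> nat \<Rightarrow> (nat \<Rightarrow> real) \<Rightarrow> (nat \<Rightarrow> real) \<Rightarrow> bool" where
  "gip_feasible n l h k x z \<longleftrightarrow>
     (\<forall>j<n. l j 0 * z j \<le> x j \<and> x j \<le> h j 0 * z j \<and> z j \<in> {0, 1}) \<and>
     (\<Sum>j<n. z j) \<le> real k"

end

theory Submission
  imports Defs
begin

lemma pow_entry_Suc:
  fixes A :: "real mat"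
  assumes A: "A \<in> carrier_mat n n" and i: "i < n" and j: "j < n"
  shows "(A ^\<^sub>m Suc t) $$ (i, j) = (\<Sum>l<n. (A ^\<^sub>m t) $$ (i, l) * A $$ (l, j))"
  using A i j by (simp add: scalar_prod_def atLeast0LessThan)

lemma pow_Suc_left:
  fixes A :: "'a::semiring_1 mat"
  assumes A: "A \<in> carrier_mat n n"
  shows "A ^\<^sub>m Suc t = A * A ^\<^sub>m t"
proof (induction t)
  case 0 then show ?case using A by simp
next
  case (Suc t)
  have "A ^\<^sub>m Suc (Suc t) = (A * A ^\<^sub>m t) * A" using Suc by simp
  also have "\<dots> = A * (A ^\<^sub>m t * A)"
    by (rule assoc_mult_mat[OF A pow_carrier_mat[OF A] A])
  finally show ?case by simp
qed

lemma pow_smult: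
  fixes A :: "'a::comm_semiring_1 mat"
  assumes A: "A \<in> carrier_mat n n"
  shows "(c \<cdot>\<^sub>m A) ^\<^sub>m t = c ^ t \<cdot>\<^sub>m (A ^\<^sub>m t)"
proof (induction t)
  case 0 then show ?case using A by (auto intro!: eq_matI)
next
  case (Suc t)
  have "(c \<cdot>\<^sub>m A) ^\<^sub>m Suc t = (c ^ t \<cdot>\<^sub>m (A ^\<^sub>m t)) * (c \<cdot>\<^sub>m A)" using Suc by simp
  also have "\<dots> = c ^ t \<cdot>\<^sub>m (A ^\<^sub>m t * (c \<cdot>\<^sub>m A))"
    using mult_smult_assoc_mat[OF pow_carrier_mat[OF A] smult_carrier_mat[OF A], of "c^t" t c] by simp
  also have "\<dots> = c ^ t \<cdot>\<^sub>m (c \<cdot>\<^sub>m (A ^\<^sub>m t * A))"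
    using mult_smult_distrib[OF pow_carrier_mat[OF A] A] by simp
  also have "\<dots> = c ^ Suc t \<cdot>\<^sub>m (A ^\<^sub>m Suc t)"
    by (auto intro!: eq_matI simp: ac_simps)
  finally show ?case .
qed

lemma map_pow_of_real:
  fixes A :: "real mat"
  assumes A: "A \<in> carrier_mat n n"
  shows "map_mat complex_of_real (A ^\<^sub>m t) = (map_mat complex_of_real A) ^\<^sub>m t"
proof (induction t)
  case 0 then show ?case using A by (auto intro!: eq_matI)
next
  case (Suc t)
  show ?case
    using Suc[symmetric] A
    by (auto intro!: eq_matI simp: scalar_prod_def of_real_sum)
qed

lemma pow_nonneg:
  fixes W :: "real mat"
  assumes W: "W \<in> carrier_mat n n" and nn: "\<forall>i<n. \<forall>j<n. W $$ (i, j) \<ge> 0"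
  shows "i < n \<Longrightarrow> j < n \<Longrightarrow> 0 \<le> (W ^\<^sub>m t) $$ (i, j)"
proof (induction t arbitrary: i j)
  case 0 then show ?case using W by simp
next
  case (Suc t)
  show ?case unfolding pow_entry_Suc[OF W Suc.prems]
    using Suc nn by (auto intro!: sum_nonneg)
qed

lemma min_edge_props:
  fixes W :: "real mat"
  assumes W: "W \<in> carrier_mat n n" and l: "l < n" and j: "j < n" and pos: "W $$ (l, j) > 0"
  shows "min_edge_weight W \<le> W $$ (l, j)" "0 < min_edge_weight W"
proof -
  let ?S = "{W $$ (i, j) | i j. i < dim_row W \<and> j < dim_col W \<and> W $$ (i, j) > 0}"
  have fin: "finite ?S"
    by (rule finite_subset[of _ "(\<lambda>(i,j). W $$ (i,j)) ` ({..<dim_row W} \<times> {..<dim_col W})"]) auto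
  have mem: "W $$ (l, j) \<in> ?S" using W l j pos by auto
  show "min_edge_weight W \<le> W $$ (l, j)" unfolding min_edge_weight_def
    using Min_le[OF fin mem] .
  have ne: "?S \<noteq> {}" using mem by auto
  show "0 < min_edge_weight W" unfolding min_edge_weight_def
    using Min_gr_iff[OF fin ne] by auto
qed

lemma pow_pos_ge:
  fixes W :: "real mat"
  assumes W: "W \<in> carrier_mat n n" and nn: "\<forall>i<n. \<forall>j<n. W $$ (i, j) \<ge> 0"
  shows "i < n \<Longrightarrow> j < n \<Longrightarrow> 0 < (W ^\<^sub>m t) $$ (i, j) \<Longrightarrow> min_edge_weight W ^ t \<le> (W ^\<^sub>m t) $$ (i, j)"
proof (induction t arbitrary: i j)
  case 0 then show ?case using W by (simp split: if_splits)
next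
  case (Suc t)
  let ?P = "W ^\<^sub>m t"
  have eq: "(W ^\<^sub>m Suc t) $$ (i, j) = (\<Sum>l<n. ?P $$ (i, l) * W $$ (l, j))"
    using pow_entry_Suc[OF W Suc.prems(1,2)] .
  have "\<exists>l<n. ?P $$ (i, l) * W $$ (l, j) > 0"
  proof (rule ccontr)
    assume "\<not> ?thesis"
    then have "(\<Sum>l<n. ?P $$ (i, l) * W $$ (l, j)) \<le> 0"
      by (intro sum_nonpos) (meson lessThan_iff not_less)
    then show False using Suc.prems(3) eq by simp
  qed
  then obtain l where l: "l < n" and pl: "?P $$ (i, l) * W $$ (l, j) > 0" by blast
  have p0: "0 \<le> ?P $$ (i, l)" using pow_nonneg[OF W nn Suc.prems(1) l] .
  have w0: "0 \<le> W $$ (l, j)" using nn l Suc.prems(2) by auto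
  have ppos: "0 < ?P $$ (i, l)" using pl p0 w0
    by (metis less_eq_real_def mult_eq_0_iff)
  have wpos: "0 < W $$ (l, j)" using pl p0 w0
    by (metis less_eq_real_def mult_eq_0_iff)
  have ih: "min_edge_weight W ^ t \<le> ?P $$ (i, l)" using Suc.IH[OF Suc.prems(1) l ppos] .
  note me = min_edge_props[OF W l Suc.prems(2) wpos]
  have "min_edge_weight W ^ Suc t = min_edge_weight W ^ t * min_edge_weight W" by simp
  also have "\<dots> \<le> ?P $$ (i, l) * W $$ (l, j)"
    using ih me p0 by (intro mult_mono) auto
  also have "\<dots> \<le> (\<Sum>l<n. ?P $$ (i, l) * W $$ (l, j))"
    using l p0 by (intro member_le_sum) (use pow_nonneg[OF W nn] nn Suc.prems in auto)
  finally show ?case using eq by simp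
qed

lemma gip_f_id:
  assumes "0 \<le> lo" "lo \<le> hi" "0 \<le> S" "S \<le> hi" "S > 0 \<Longrightarrow> lo \<le> S"
  shows "gip_f lo hi S = S"
  using assms unfolding gip_f_def by (cases "S > 0") auto

lemma traj_linear:
  fixes W :: "real mat"
  assumes W: "W \<in> carrier_mat n n"
    and W_nonneg: "\<forall>i<n. \<forall>j<n. W $$ (i, j) \<ge> 0"
    and bounds: "\<forall>j<n. \<forall>t. 0 \<le> l j t \<and> l j t \<le> h j t"
    and regime: "\<forall>t>0. \<forall>j<n.
        l j t \<le> Min {l i 0 | i. i < n} * min_edge_weight W ^ t \<and>
        Min {l i 0 | i. i < n} * min_edge_weight W ^ t \<le> (\<Sum>i<n. h i 0 * (W ^\<^sub>m t) $$ (i, j)) \<and>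
        (\<Sum>i<n. h i 0 * (W ^\<^sub>m t) $$ (i, j)) \<le> h j t"
    and x: "\<forall>j<n. x j = 0 \<or> (l j 0 \<le> x j \<and> x j \<le> h j 0)"
  shows "\<forall>j<n. gip_traj W l h x t j = (\<Sum>i<n. (W ^\<^sub>m t) $$ (i, j) * x i)"
proof (induction t)
  case 0 then show ?case using W
  proof (intro allI impI)
    fix j assume j: "j < n"
    have "(\<Sum>i<n. (W ^\<^sub>m 0) $$ (i, j) * x i) = (\<Sum>i<n. if i = j then x i else 0)"
      using W j by (intro sum.cong) auto
    also have "\<dots> = x j" using j by (simp add: sum.delta)
    finally show "gip_traj W l h x 0 j = (\<Sum>i<n. (W ^\<^sub>m 0) $$ (i, j) * x i)" by simp
  qed
next
  case (Suc t)
  show ?case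
  proof (intro allI impI)
    fix j assume j: "j < n"
    let ?P = "W ^\<^sub>m t" and ?Q = "W ^\<^sub>m Suc t"
    define S where "S = (\<Sum>m<n. ?Q $$ (m, j) * x m)"
    have x0: "\<forall>m<n. 0 \<le> x m"
    proof (intro allI impI)
      fix m assume "m < n" then show "0 \<le> x m"
        using x[rule_format, of m] bounds[rule_format, of m 0] by linarith
    qed
    have xh: "\<forall>m<n. x m \<le> h m 0"
    proof (intro allI impI)
      fix m assume "m < n" then show "x m \<le> h m 0"
        using x[rule_format, of m] bounds[rule_format, of m 0] by linarith
    qed
    have Qnn: "\<forall>m<n. 0 \<le> ?Q $$ (m, j)" using pow_nonneg[OF W W_nonneg _ j] by blast
    have "(\<Sum>i<dim_row W. W $$ (i, j) * gip_traj W l h x t i)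
        = (\<Sum>i<n. W $$ (i, j) * (\<Sum>m<n. ?P $$ (m, i) * x m))"
      using W Suc by simp
    also have "\<dots> = (\<Sum>i<n. \<Sum>m<n. W $$ (i, j) * (?P $$ (m, i) * x m))"
      by (simp only: sum_distrib_left)
    also have "\<dots> = (\<Sum>m<n. \<Sum>i<n. W $$ (i, j) * (?P $$ (m, i) * x m))"
      by (rule sum.swap)
    also have "\<dots> = (\<Sum>m<n. (\<Sum>i<n. ?P $$ (m, i) * W $$ (i, j)) * x m)"
      by (intro sum.cong refl) (simp add: sum_distrib_right sum_distrib_left ac_simps)
    also have "\<dots> = S" unfolding S_def
      using pow_entry_Suc[OF W _ j] by (intro sum.cong) auto
    finally have eq: "(\<Sum>i<dim_row W. W $$ (i, j) * gip_traj W l h x t i) = S" .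
    have S0: "0 \<le> S" unfolding S_def using Qnn x0 by (intro sum_nonneg) auto
    have "S \<le> (\<Sum>m<n. h m 0 * ?Q $$ (m, j))" unfolding S_def
      using Qnn xh by (intro sum_mono) (simp add: mult.commute mult_right_mono)
    also have "\<dots> \<le> h j (Suc t)" using regime[rule_format, of "Suc t" j] j by blast
    finally have Sh: "S \<le> h j (Suc t)" .
    have Sl: "l j (Suc t) \<le> S" if Spos: "S > 0"
    proof -
      have "\<exists>m<n. ?Q $$ (m, j) * x m > 0"
      proof (rule ccontr)
        assume "\<not> ?thesis"
        then have "S \<le> 0" unfolding S_def by (intro sum_nonpos) (meson lessThan_iff not_less)
        then show False using Spos by simp
      qed
      then obtain m where m: "m < n" and pm: "?Q $$ (m, j) * x m > 0" by blast
      have Qpos: "?Q $$ (m, j) > 0" and xpos: "x m > 0" using pm Qnn x0 m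
        by (simp_all add: zero_less_mult_iff) (meson less_le_not_le)+
      have xl: "l m 0 \<le> x m" using x m xpos by auto
      let ?L = "Min {l i 0 | i. i < n}"
      have finL: "finite {l i 0 | i. i < n}"
        by (rule finite_subset[of _ "(\<lambda>i. l i 0) ` {..<n}"]) auto
      have Lle: "?L \<le> l m 0" using Min_le[OF finL] m by blast
      have "?L \<in> {l i 0 | i. i < n}" using Min_in[OF finL] m by blast
      then have L0: "0 \<le> ?L" using bounds by auto
      have "l j (Suc t) \<le> ?L * min_edge_weight W ^ Suc t" using regime[rule_format, of "Suc t" j] j by blast
      also have "\<dots> \<le> ?L * ?Q $$ (m, j)"
        using pow_pos_ge[OF W W_nonneg m j Qpos] L0 by (intro mult_left_mono)
      also have "\<dots> \<le> x m * ?Q $$ (m, j)"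
        using Lle xl Qpos by (intro mult_right_mono) auto
      also have "\<dots> \<le> S" unfolding S_def
        using m Qnn x0 member_le_sum[of m "{..<n}" "\<lambda>m. ?Q $$ (m, j) * x m"]
        by (simp add: mult.commute)
      finally show ?thesis .
    qed
    show "gip_traj W l h x (Suc t) j = (\<Sum>i<n. ?Q $$ (i, j) * x i)"
      unfolding S_def[symmetric]
      using gip_f_id[of "l j (Suc t)" "h j (Suc t)" S] eq S0 Sh Sl bounds j by auto
  qed
qed

lemma spectral_radius_nonneg:
  assumes A: "A \<in> carrier_mat n n" and n: "n > 0"
  shows "0 \<le> spectral_radius A"
  using spectral_radius_mem_max(1)[OF A n] by auto

lemma spectral_radius_smult:
  assumes A: "A \<in> carrier_mat n n" and n: "n > 0" and b: "b > 0"
  shows "spectral_radius (complex_of_real b \<cdot>\<^sub>m A) \<le> b * spectral_radius A"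
proof -
  have bA: "complex_of_real b \<cdot>\<^sub>m A \<in> carrier_mat n n" using A by simp
  from spectral_radius_mem_max(1)[OF bA n] obtain mu where
    mu: "mu \<in> spectrum (complex_of_real b \<cdot>\<^sub>m A)" and r: "spectral_radius (complex_of_real b \<cdot>\<^sub>m A) = norm mu"
    by auto
  from mu obtain v where v: "v \<in> carrier_vec n" "v \<noteq> 0\<^sub>v n"
    and ev: "(complex_of_real b \<cdot>\<^sub>m A) *\<^sub>v v = mu \<cdot>\<^sub>v v"
    unfolding spectrum_def eigenvalue_def eigenvector_def using A by auto
  have "A *\<^sub>v v = (mu / complex_of_real b) \<cdot>\<^sub>v v"
  proof (rule eq_vecI)
    fix i assume i: "i < dim_vec ((mu / complex_of_real b) \<cdot>\<^sub>v v)"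
    then have i': "i < n" using v by simp
    have "((complex_of_real b \<cdot>\<^sub>m A) *\<^sub>v v) $ i = (mu \<cdot>\<^sub>v v) $ i" using ev by simp
    then have "complex_of_real b * (row A i \<bullet> v) = mu * v $ i"
      using i' A v by simp
    then show "(A *\<^sub>v v) $ i = ((mu / complex_of_real b) \<cdot>\<^sub>v v) $ i"
      using i' A v b by (simp add: field_simps)
  next
    show "dim_vec (A *\<^sub>v v) = dim_vec ((mu / complex_of_real b) \<cdot>\<^sub>v v)" using A v by simp
  qed
  then have "eigenvalue A (mu / complex_of_real b)"
    unfolding eigenvalue_def eigenvector_def using A v by auto
  then have "norm (mu / complex_of_real b) \<le> spectral_radius A"
    using spectral_radius_mem_max(2)[OF A n] unfolding spectrum_def by auto
  then have "norm mu / b \<le> spectral_radius A" using b by (simp add: norm_divide)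
  then show ?thesis using r b by (simp add: field_simps)
qed

lemma geo_bound:
  fixes W :: "real mat"
  assumes W: "W \<in> carrier_mat n n" and n: "n > 0" and a: "a > 0"
    and rho: "a * spectral_radius (map_mat complex_of_real W) < 1"
  shows "\<exists>C q. 0 \<le> q \<and> q < 1 \<and> (\<forall>t i j. i < n \<longrightarrow> j < n \<longrightarrow> \<bar>((a \<cdot>\<^sub>m W) ^\<^sub>m t) $$ (i, j)\<bar> \<le> C * q ^ t)"
proof -
  let ?Wc = "map_mat complex_of_real W"
  let ?r = "spectral_radius ?Wc"
  have Wc: "?Wc \<in> carrier_mat n n" using W by simp
  have r0: "0 \<le> ?r" using spectral_radius_nonneg[OF Wc n] .
  define q where "q = (1 + a * ?r) / 2"
  define b where "b = a / q"
  have ar0: "0 \<le> a * ?r" using a r0 by simp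
  have q0: "0 < q" unfolding q_def using ar0 by simp
  have q1: "q < 1" unfolding q_def using rho by simp
  have b0: "0 < b" unfolding b_def using a q0 by simp
  have "b * ?r < 1"
  proof -
    have "b * ?r = a * ?r / q" unfolding b_def by simp
    also have "\<dots> < 1" using q0 rho unfolding q_def by (simp add: field_simps)
    finally show ?thesis .
  qed
  then have sr: "spectral_radius (complex_of_real b \<cdot>\<^sub>m ?Wc) < 1"
    using spectral_radius_smult[OF Wc n b0] by linarith
  from spectral_radius_jnf_norm_bound_less_1_upper_triangular[OF _ sr] Wc
  obtain C where C: "\<And>k. norm_bound ((complex_of_real b \<cdot>\<^sub>m ?Wc) ^\<^sub>m k) C"
    by (metis smult_carrier_mat)
  have "\<forall>t i j. i < n \<longrightarrow> j < n \<longrightarrow> \<bar>((a \<cdot>\<^sub>m W) ^\<^sub>m t) $$ (i, j)\<bar> \<le> C * q ^ t"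
  proof (intro allI impI)
    fix t i j assume i: "i < n" and j: "j < n"
    have "(complex_of_real b \<cdot>\<^sub>m ?Wc) ^\<^sub>m t = complex_of_real b ^ t \<cdot>\<^sub>m (?Wc ^\<^sub>m t)"
      using pow_smult[OF Wc] .
    also have "?Wc ^\<^sub>m t = map_mat complex_of_real (W ^\<^sub>m t)"
      using map_pow_of_real[OF W] by simp
    finally have eq: "(complex_of_real b \<cdot>\<^sub>m ?Wc) ^\<^sub>m t = complex_of_real b ^ t \<cdot>\<^sub>m map_mat complex_of_real (W ^\<^sub>m t)" .
    have "norm (((complex_of_real b \<cdot>\<^sub>m ?Wc) ^\<^sub>m t) $$ (i, j)) \<le> C"
      using C[of t] i j Wc unfolding norm_bound_def by simp
    then have "norm (complex_of_real (b ^ t * (W ^\<^sub>m t) $$ (i, j))) \<le> C"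
      unfolding eq using i j W by simp
    then have hb: "b ^ t * \<bar>(W ^\<^sub>m t) $$ (i, j)\<bar> \<le> C"
      using b0 by (simp add: abs_mult norm_mult norm_power)
    have "\<bar>((a \<cdot>\<^sub>m W) ^\<^sub>m t) $$ (i, j)\<bar> = a ^ t * \<bar>(W ^\<^sub>m t) $$ (i, j)\<bar>"
      using pow_smult[OF W, of a t] i j W a by (simp add: abs_mult)
    also have "\<dots> = q ^ t * (b ^ t * \<bar>(W ^\<^sub>m t) $$ (i, j)\<bar>)"
      unfolding b_def using q0 by (simp add: power_divide)
    also have "\<dots> \<le> q ^ t * C" using hb q0 by (intro mult_left_mono) auto
    finally show "\<bar>((a \<cdot>\<^sub>m W) ^\<^sub>m t) $$ (i, j)\<bar> \<le> C * q ^ t" by (simp add: mult.commute)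
  qed
  then show ?thesis using q0 q1 by (intro exI[of _ C] exI[of _ q]) auto
qed

lemma mult_entry:
  fixes A B :: "'a::comm_semiring_0 mat"
  assumes "A \<in> carrier_mat n n" "B \<in> carrier_mat n n" "i < n" "j < n"
  shows "(A * B) $$ (i, j) = (\<Sum>k<n. A $$ (i, k) * B $$ (k, j))"
  using assms by (simp add: scalar_prod_def atLeast0LessThan)

lemma neumann_summable:
  fixes M :: "real mat"
  assumes geo: "0 \<le> q" "q < 1" "\<forall>t i j. i < n \<longrightarrow> j < n \<longrightarrow> \<bar>(M ^\<^sub>m t) $$ (i, j)\<bar> \<le> C * q ^ t"
    and i: "i < n" and j: "j < n"
  shows "summable (\<lambda>t. (M ^\<^sub>m Suc t) $$ (i, j))"
proof (rule summable_comparison_test)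
  show "\<exists>N. \<forall>t\<ge>N. norm ((M ^\<^sub>m Suc t) $$ (i, j)) \<le> C * q ^ Suc t"
  proof (intro exI[of _ 0] allI impI)
    fix t show "norm ((M ^\<^sub>m Suc t) $$ (i, j)) \<le> C * q ^ Suc t"
      using geo(3) i j unfolding real_norm_def by blast
  qed
  show "summable (\<lambda>t. C * q ^ Suc t)"
    using geo by (intro summable_mult summable_mult2) (simp add: summable_geometric)
qed

lemma neumann_inverse:
  fixes M :: "real mat"
  assumes M: "M \<in> carrier_mat n n"
    and geo: "0 \<le> q" "q < 1" "\<forall>t i j. i < n \<longrightarrow> j < n \<longrightarrow> \<bar>(M ^\<^sub>m t) $$ (i, j)\<bar> \<le> C * q ^ t"
  shows "mat_inverse (1\<^sub>m n - M) = Some (1\<^sub>m n + mat n n (\<lambda>(i, j). \<Sum>t. (M ^\<^sub>m Suc t) $$ (i, j)))"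
proof -
  define N where "N i j = (\<Sum>t. (M ^\<^sub>m Suc t) $$ (i, j))" for i j
  define Nm where "Nm = mat n n (\<lambda>(i, j). N i j)"
  have summ: "\<And>i j. i < n \<Longrightarrow> j < n \<Longrightarrow> summable (\<lambda>t. (M ^\<^sub>m Suc t) $$ (i, j))"
    using neumann_summable[OF geo] by blast
  have M1: "\<And>i j. i < n \<Longrightarrow> j < n \<Longrightarrow> (M ^\<^sub>m Suc 0) $$ (i, j) = M $$ (i, j)"
    using M by simp
  have split: "\<And>i j. i < n \<Longrightarrow> j < n \<Longrightarrow> (\<Sum>t. (M ^\<^sub>m Suc (Suc t)) $$ (i, j)) = N i j - M $$ (i, j)"
    unfolding N_def using suminf_split_head[OF summ] M1 by simp
  have left: "(\<Sum>k<n. M $$ (i, k) * N k j) = N i j - M $$ (i, j)" if i: "i < n" and j: "j < n" for i j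
  proof -
    have "(\<Sum>k<n. M $$ (i, k) * N k j) = (\<Sum>k<n. \<Sum>t. M $$ (i, k) * (M ^\<^sub>m Suc t) $$ (k, j))"
      unfolding N_def using summ j by (intro sum.cong refl suminf_mult[symmetric]) auto
    also have "\<dots> = (\<Sum>t. \<Sum>k<n. M $$ (i, k) * (M ^\<^sub>m Suc t) $$ (k, j))"
      using summ j by (intro suminf_sum[symmetric] summable_mult) auto
    also have "\<dots> = (\<Sum>t. (M ^\<^sub>m Suc (Suc t)) $$ (i, j))"
    proof (intro suminf_cong)
      fix t
      have e: "(M ^\<^sub>m Suc (Suc t)) $$ (i, j) = (M * M ^\<^sub>m Suc t) $$ (i, j)"
        by (simp only: pow_Suc_left[OF M, of "Suc t"])
      show "(\<Sum>k<n. M $$ (i, k) * (M ^\<^sub>m Suc t) $$ (k, j)) = (M ^\<^sub>m Suc (Suc t)) $$ (i, j)"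
        by (simp only: e mult_entry[OF M pow_carrier_mat[OF M] i j])
    qed
    also have "\<dots> = N i j - M $$ (i, j)" using split i j .
    finally show ?thesis .
  qed
  have right: "(\<Sum>k<n. N i k * M $$ (k, j)) = N i j - M $$ (i, j)" if i: "i < n" and j: "j < n" for i j
  proof -
    have "(\<Sum>k<n. N i k * M $$ (k, j)) = (\<Sum>k<n. \<Sum>t. (M ^\<^sub>m Suc t) $$ (i, k) * M $$ (k, j))"
      unfolding N_def using summ i by (intro sum.cong refl suminf_mult2) auto
    also have "\<dots> = (\<Sum>t. \<Sum>k<n. (M ^\<^sub>m Suc t) $$ (i, k) * M $$ (k, j))"
      using summ i by (intro suminf_sum[symmetric] summable_mult2) auto
    also have "\<dots> = (\<Sum>t. (M ^\<^sub>m Suc (Suc t)) $$ (i, j))"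
    proof (intro suminf_cong)
      fix t
      have e: "(M ^\<^sub>m Suc (Suc t)) $$ (i, j) = (M ^\<^sub>m Suc t * M) $$ (i, j)"
        by (simp only: pow_mat.simps(2)[of M "Suc t"])
      show "(\<Sum>k<n. (M ^\<^sub>m Suc t) $$ (i, k) * M $$ (k, j)) = (M ^\<^sub>m Suc (Suc t)) $$ (i, j)"
        by (simp only: e mult_entry[OF pow_carrier_mat[OF M] M i j])
    qed
    also have "\<dots> = N i j - M $$ (i, j)" using split i j .
    finally show ?thesis .
  qed
  have IM: "1\<^sub>m n - M \<in> carrier_mat n n" using M by (simp add: minus_carrier_mat)
  have IN: "1\<^sub>m n + Nm \<in> carrier_mat n n" unfolding Nm_def by simp
  have delta: "\<And>i j f. i < n \<Longrightarrow> (\<Sum>k<n. (if i = k then 1 else 0) * f k) = (f i :: real)"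
  proof -
    fix i j and f :: "nat \<Rightarrow> real" assume i: "i < n"
    have "(\<Sum>k<n. (if i = k then 1 else 0) * f k) = (\<Sum>k<n. if i = k then f k else 0)"
      by (intro sum.cong) auto
    then show "(\<Sum>k<n. (if i = k then 1 else 0) * f k) = f i" using i by (simp add: sum.delta)
  qed
  have delta2: "\<And>i j f. j < n \<Longrightarrow> (\<Sum>k<n. f k * (if k = j then 1 else 0)) = (f j :: real)"
  proof -
    fix i j and f :: "nat \<Rightarrow> real" assume j: "j < n"
    have "(\<Sum>k<n. f k * (if k = j then 1 else 0)) = (\<Sum>k<n. if k = j then f k else 0)"
      by (intro sum.cong) auto
    then show "(\<Sum>k<n. f k * (if k = j then 1 else 0)) = f j" using j by (simp add: sum.delta')
  qed
  have P1: "(1\<^sub>m n - M) * (1\<^sub>m n + Nm) = 1\<^sub>m n"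
  proof (rule eq_matI)
    fix i j assume "i < dim_row (1\<^sub>m n :: real mat)" "j < dim_col (1\<^sub>m n :: real mat)"
    then have i: "i < n" and j: "j < n" by auto
    have "((1\<^sub>m n - M) * (1\<^sub>m n + Nm)) $$ (i, j)
        = (\<Sum>k<n. ((if i = k then 1 else 0) - M $$ (i, k)) * ((if k = j then 1 else 0) + N k j))"
      unfolding mult_entry[OF IM IN i j] using M i j by (intro sum.cong refl) (auto simp: Nm_def)
    also have "\<dots> = (\<Sum>k<n. (if i = k then 1 else 0) * ((if k = j then 1 else 0) + N k j))
        - (\<Sum>k<n. M $$ (i, k) * (if k = j then 1 else 0)) - (\<Sum>k<n. M $$ (i, k) * N k j)"
      by (simp add: algebra_simps sum.distrib sum_subtractf)
    also have "\<dots> = (if i = j then 1 else 0)"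
      using delta[OF i] delta2[OF j] left[OF i j] by simp
    finally show "((1\<^sub>m n - M) * (1\<^sub>m n + Nm)) $$ (i, j) = 1\<^sub>m n $$ (i, j)" using i j by simp
  qed (use M in \<open>auto simp: Nm_def\<close>)
  have P2: "(1\<^sub>m n + Nm) * (1\<^sub>m n - M) = 1\<^sub>m n"
  proof (rule eq_matI)
    fix i j assume "i < dim_row (1\<^sub>m n :: real mat)" "j < dim_col (1\<^sub>m n :: real mat)"
    then have i: "i < n" and j: "j < n" by auto
    have "((1\<^sub>m n + Nm) * (1\<^sub>m n - M)) $$ (i, j)
        = (\<Sum>k<n. ((if i = k then 1 else 0) + N i k) * ((if k = j then 1 else 0) - M $$ (k, j)))"
      unfolding mult_entry[OF IN IM i j] using M i j by (intro sum.cong refl) (auto simp: Nm_def)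
    also have "\<dots> = (\<Sum>k<n. (if i = k then 1 else 0) * ((if k = j then 1 else 0) - M $$ (k, j)))
        + (\<Sum>k<n. N i k * (if k = j then 1 else 0)) - (\<Sum>k<n. N i k * M $$ (k, j))"
      by (simp add: algebra_simps sum.distrib sum_subtractf)
    also have "\<dots> = (if i = j then 1 else 0)"
      using delta[OF i] delta2[OF j] right[OF i j] by simp
    finally show "((1\<^sub>m n + Nm) * (1\<^sub>m n - M)) $$ (i, j) = 1\<^sub>m n $$ (i, j)" using i j by simp
  qed (use M in \<open>auto simp: Nm_def\<close>)
  show ?thesis
  proof (cases "mat_inverse (1\<^sub>m n - M)")
    case None
    from mat_inverse(1)[OF IM None, of undefined]
    have "1\<^sub>m n - M \<notin> Units (ring_mat TYPE(real) n undefined)" .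
    moreover have "1\<^sub>m n - M \<in> Units (ring_mat TYPE(real) n undefined)"
      unfolding Units_def ring_mat_def using IM IN P1 P2 by auto
    ultimately show ?thesis by contradiction
  next
    case (Some B)
    from mat_inverse(2)[OF IM Some] have B: "B * (1\<^sub>m n - M) = 1\<^sub>m n" "B \<in> carrier_mat n n" by auto
    have "B = B * ((1\<^sub>m n - M) * (1\<^sub>m n + Nm))" using P1 B by simp
    also have "\<dots> = (B * (1\<^sub>m n - M)) * (1\<^sub>m n + Nm)"
      by (rule assoc_mult_mat[symmetric, OF B(2) IM IN])
    also have "\<dots> = 1\<^sub>m n + Nm" using B left_mult_one_mat[OF IN] by simp
    finally show ?thesis using Some unfolding Nm_def N_def by simp
  qed
qed

lemma sum_if_subset:
  fixes f :: "nat \<Rightarrow> real"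
  assumes "B \<subseteq> {..<n}"
  shows "(\<Sum>j<n. if j \<in> B then f j else 0) = sum f B"
proof -
  have e: "{x. x < n \<and> x \<in> B} = B" using assms by auto
  show ?thesis by (simp add: sum.If_cases Int_def e)
qed

lemma exchange:
  fixes f :: "nat \<Rightarrow> real"
  assumes fin: "finite A" "finite S" and card: "card S \<le> card A"
    and nn: "\<forall>x\<in>A \<union> S. 0 \<le> f x" and top: "\<forall>i\<in>S - A. \<forall>j\<in>A - S. f i \<le> f j"
  shows "sum f S \<le> sum f A"
proof -
  have eS: "sum f S = sum f (S \<inter> A) + sum f (S - A)" using fin by (metis sum.Int_Diff)
  have eA: "sum f A = sum f (S \<inter> A) + sum f (A - S)" using fin
    by (metis Int_commute sum.Int_Diff)
  have cS: "card S = card (S \<inter> A) + card (S - A)" using fin by (metis card_Int_Diff)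
  have cA: "card A = card (S \<inter> A) + card (A - S)" using fin by (metis Int_commute card_Int_Diff)
  have cc: "card (S - A) \<le> card (A - S)" using cS cA card by linarith
  have "sum f (S - A) \<le> sum f (A - S)"
  proof (cases "S - A = {}")
    case True
    have "0 \<le> sum f (A - S)" using nn by (intro sum_nonneg) auto
    then show ?thesis using True by (simp only: True sum.empty)
  next
    case False
    then have "card (S - A) > 0" using fin by auto
    then have "card (A - S) > 0" using cc by linarith
    then have ne: "A - S \<noteq> {}" by (metis card.empty less_irrefl)
    have finAS: "finite (A - S)" using fin by auto
    define m where "m = Min (f ` (A - S))"
    have m0: "0 \<le> m" unfolding m_def using nn ne finAS by (auto simp: Min_ge_iff)
    have "sum f (S - A) \<le> of_nat (card (S - A)) * m"
      using top ne finAS unfolding m_def by (intro sum_bounded_above) (auto simp: Min_ge_iff)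
    also have "\<dots> \<le> of_nat (card (A - S)) * m" using cc m0 by (intro mult_right_mono) auto
    also have "\<dots> \<le> sum f (A - S)"
      unfolding m_def using finAS by (intro sum_bounded_below) auto
    finally show ?thesis .
  qed
  then show ?thesis using eS eA by linarith
qed

theorem theorem5:
  fixes W :: "real mat" and n k :: nat and l h :: "nat \<Rightarrow> nat \<Rightarrow> real"
    and \<gamma> :: real and A :: "nat set"
  assumes W: "W \<in> carrier_mat n n"
    and W_nonneg: "\<forall>i<n. \<forall>j<n. W $$ (i, j) \<ge> 0"
    and bounds: "\<forall>j<n. \<forall>t. 0 \<le> l j t \<and> l j t \<le> h j t"
    and l0_pos: "\<forall>j<n. l j 0 > 0"
    and regime: "\<forall>t>0. \<forall>j<n.
        l j t \<le> Min {l i 0 | i. i < n} * min_edge_weight W ^ t \<and>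
        Min {l i 0 | i. i < n} * min_edge_weight W ^ t \<le> (\<Sum>i<n. h i 0 * (W ^\<^sub>m t) $$ (i, j)) \<and>
        (\<Sum>i<n. h i 0 * (W ^\<^sub>m t) $$ (i, j)) \<le> h j t"
    and gamma: "0 \<le> \<gamma>" "\<gamma> < 1"
    and gamma_rho: "(1 - \<gamma>) * spectral_radius (map_mat complex_of_real W) < 1"
    and k: "1 \<le> k" "k \<le> n"
    and A: "A \<subseteq> {..<n}" "card A = k"
    and A_top: "\<forall>i<n. \<forall>j\<in>A. i \<notin> A \<longrightarrow>
        h i 0 * katz W \<gamma> $ i \<le> h j 0 * katz W \<gamma> $ j"
  shows "gip_feasible n l h k (\<lambda>j. if j \<in> A then h j 0 else 0) (\<lambda>j. if j \<in> A then 1 else 0)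
       \<and> (\<forall>x z. gip_feasible n l h k x z \<longrightarrow>
            gip_score W l h \<gamma> x \<le> gip_score W l h \<gamma> (\<lambda>j. if j \<in> A then h j 0 else 0))
       \<and> (\<forall>x z. gip_feasible n l h k x z \<longrightarrow>
            (\<forall>j<n. summable (\<lambda>t. (1 - \<gamma>) ^ Suc t * gip_traj W l h x (Suc t) j)) \<and>
            gip_score W l h \<gamma> x = (\<Sum>j<n. katz W \<gamma> $ j * x j))"
proof -
  have n: "n > 0" using k by linarith
  define a where "a = 1 - \<gamma>"
  have a: "a > 0" unfolding a_def using gamma by simp
  define M where "M = a \<cdot>\<^sub>m W"
  have M: "M \<in> carrier_mat n n" unfolding M_def using W by simp
  have rho: "a * spectral_radius (map_mat complex_of_real W) < 1" unfolding a_def using gamma_rho .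
  obtain C q where geo: "0 \<le> q" "q < 1"
    "\<forall>t i j. i < n \<longrightarrow> j < n \<longrightarrow> \<bar>(M ^\<^sub>m t) $$ (i, j)\<bar> \<le> C * q ^ t"
    using geo_bound[OF W n a rho] unfolding M_def by blast
  define N where "N i j = (\<Sum>t. (M ^\<^sub>m Suc t) $$ (i, j))" for i j
  have summ: "\<And>i j. i < n \<Longrightarrow> j < n \<Longrightarrow> summable (\<lambda>t. (M ^\<^sub>m Suc t) $$ (i, j))"
    using neumann_summable[OF geo] by blast
  have inv: "mat_inverse (1\<^sub>m n - (1 - \<gamma>) \<cdot>\<^sub>m W) = Some (1\<^sub>m n + mat n n (\<lambda>(i, j). N i j))"
    using neumann_inverse[OF M geo] unfolding M_def a_def N_def .
  have Ment: "\<And>t i j. i < n \<Longrightarrow> j < n \<Longrightarrow> (M ^\<^sub>m t) $$ (i, j) = a ^ t * (W ^\<^sub>m t) $$ (i, j)"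
    unfolding M_def using pow_smult[OF W] W by simp
  have Mnn: "\<And>t i j. i < n \<Longrightarrow> j < n \<Longrightarrow> 0 \<le> (M ^\<^sub>m t) $$ (i, j)"
    using Ment pow_nonneg[OF W W_nonneg] a by simp
  have Nnn: "\<And>i j. i < n \<Longrightarrow> j < n \<Longrightarrow> 0 \<le> N i j"
    unfolding N_def using summ Mnn by (intro suminf_nonneg) (simp del: pow_mat.simps)+
  have katz: "\<And>i. i < n \<Longrightarrow> katz W \<gamma> $ i = (\<Sum>j<n. N i j)"
  proof -
    fix i assume i: "i < n"
    have "katz W \<gamma> = (1\<^sub>m n + mat n n (\<lambda>(i, j). N i j) - 1\<^sub>m n) *\<^sub>v vec n (\<lambda>_. 1)"
      unfolding katz_def Let_def using W inv by simp
    then show "katz W \<gamma> $ i = (\<Sum>j<n. N i j)"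
      using i by (simp add: scalar_prod_def atLeast0LessThan)
  qed
  have c0: "\<And>i. i < n \<Longrightarrow> 0 \<le> katz W \<gamma> $ i" using katz Nnn by (auto intro!: sum_nonneg)
  have feas_x: "\<forall>j<n. x j = 0 \<or> (l j 0 \<le> x j \<and> x j \<le> h j 0)" if "gip_feasible n l h k x z" for x z
    using that unfolding gip_feasible_def by fastforce
  have score: "(\<forall>j<n. summable (\<lambda>t. (1 - \<gamma>) ^ Suc t * gip_traj W l h x (Suc t) j)) \<and>
            gip_score W l h \<gamma> x = (\<Sum>j<n. katz W \<gamma> $ j * x j)"
    if fx: "\<forall>j<n. x j = 0 \<or> (l j 0 \<le> x j \<and> x j \<le> h j 0)" for x
  proof -
    note tr = traj_linear[OF W W_nonneg bounds regime fx]
    have trm: "(1 - \<gamma>) ^ Suc t * gip_traj W l h x (Suc t) j = (\<Sum>i<n. (M ^\<^sub>m Suc t) $$ (i, j) * x i)"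
      if j: "j < n" for t j
    proof -
      have e1: "gip_traj W l h x (Suc t) j = (\<Sum>i<n. (W ^\<^sub>m Suc t) $$ (i, j) * x i)"
        using tr[of "Suc t"] j by blast
      have "(1 - \<gamma>) ^ Suc t * gip_traj W l h x (Suc t) j
          = (\<Sum>i<n. a ^ Suc t * (W ^\<^sub>m Suc t) $$ (i, j) * x i)"
        unfolding e1 a_def by (simp only: sum_distrib_left mult.assoc)
      also have "\<dots> = (\<Sum>i<n. (M ^\<^sub>m Suc t) $$ (i, j) * x i)"
        using Ment j by (intro sum.cong refl) (simp del: pow_mat.simps)
      finally show ?thesis .
    qed
    have S: "\<forall>j<n. summable (\<lambda>t. (1 - \<gamma>) ^ Suc t * gip_traj W l h x (Suc t) j)"
    proof (intro allI impI)
      fix j assume j: "j < n"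
      have "summable (\<lambda>t. \<Sum>i<n. (M ^\<^sub>m Suc t) $$ (i, j) * x i)"
        using summ j by (intro summable_sum summable_mult2) (simp del: pow_mat.simps)
      then show "summable (\<lambda>t. (1 - \<gamma>) ^ Suc t * gip_traj W l h x (Suc t) j)"
        by (simp only: trm[OF j])
    qed
    have "gip_score W l h \<gamma> x = (\<Sum>j<n. \<Sum>t. \<Sum>i<n. (M ^\<^sub>m Suc t) $$ (i, j) * x i)"
      unfolding gip_score_def using W trm by (simp del: pow_mat.simps gip_traj.simps power.simps)
    also have "\<dots> = (\<Sum>j<n. \<Sum>i<n. N i j * x i)"
    proof (intro sum.cong refl)
      fix j assume j: "j \<in> {..<n}"
      have "(\<Sum>t. \<Sum>i<n. (M ^\<^sub>m Suc t) $$ (i, j) * x i) = (\<Sum>i<n. \<Sum>t. (M ^\<^sub>m Suc t) $$ (i, j) * x i)"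
        using summ j by (intro suminf_sum summable_mult2) auto
      also have "\<dots> = (\<Sum>i<n. N i j * x i)"
        unfolding N_def using summ j by (intro sum.cong refl suminf_mult2[symmetric]) auto
      finally show "(\<Sum>t. \<Sum>i<n. (M ^\<^sub>m Suc t) $$ (i, j) * x i) = (\<Sum>i<n. N i j * x i)" .
    qed
    also have "\<dots> = (\<Sum>i<n. \<Sum>j<n. N i j * x i)" by (rule sum.swap)
    also have "\<dots> = (\<Sum>i<n. katz W \<gamma> $ i * x i)"
      using katz by (simp add: sum_distrib_right)
    finally show ?thesis using S by simp
  qed
  define xs where "xs = (\<lambda>j. if j \<in> A then h j 0 else 0)"
  have card_sum: "(\<Sum>j<n. if j \<in> B then 1 else 0) = real (card B)" if "B \<subseteq> {..<n}" for B
  proof -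
    have eqB: "{x. x < n \<and> x \<in> B} = B" using that by auto
    have "(\<Sum>j<n. if j \<in> B then 1 else (0::real)) = (\<Sum>j\<in>{..<n} \<inter> B. 1)"
      by (simp add: sum.If_cases Int_def)
    also have "{..<n} \<inter> B = B" using that by auto
    finally show ?thesis by simp
  qed
  have P1: "gip_feasible n l h k (\<lambda>j. if j \<in> A then h j 0 else 0) (\<lambda>j. if j \<in> A then 1 else 0)"
    unfolding gip_feasible_def using bounds card_sum[OF A(1)] A(2) by auto
  have fxs: "\<forall>j<n. xs j = 0 \<or> (l j 0 \<le> xs j \<and> xs j \<le> h j 0)"
    unfolding xs_def using bounds by auto
  have finA: "finite A" using A(1) finite_subset by blast
  have sxs: "gip_score W l h \<gamma> xs = (\<Sum>j\<in>A. h j 0 * katz W \<gamma> $ j)"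
  proof -
    have "gip_score W l h \<gamma> xs = (\<Sum>j<n. katz W \<gamma> $ j * xs j)" using score[OF fxs] by blast
    also have "\<dots> = (\<Sum>j<n. if j \<in> A then h j 0 * katz W \<gamma> $ j else 0)"
      unfolding xs_def by (intro sum.cong) auto
    also have "\<dots> = (\<Sum>j\<in>A. h j 0 * katz W \<gamma> $ j)"
      using sum_if_subset[OF A(1)] .
    finally show ?thesis .
  qed
  have P2: "gip_score W l h \<gamma> x \<le> gip_score W l h \<gamma> xs" if fe: "gip_feasible n l h k x z" for x z
  proof -
    define S where "S = {j. j < n \<and> z j = 1}"
    have SS: "S \<subseteq> {..<n}" unfolding S_def by auto
    have finS: "finite S" using SS finite_subset by blast
    have z01: "\<forall>j<n. z j = 0 \<or> z j = 1" using fe unfolding gip_feasible_def by auto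
    have "(\<Sum>j<n. z j) = (\<Sum>j<n. if j \<in> S then 1 else 0)"
      using z01 unfolding S_def by (intro sum.cong) auto
    then have "real (card S) \<le> real k" using fe card_sum[OF SS] unfolding gip_feasible_def by simp
    then have cS: "card S \<le> card A" using A(2) by simp
    have "gip_score W l h \<gamma> x = (\<Sum>j<n. katz W \<gamma> $ j * x j)" using score[OF feas_x[OF fe]] by blast
    also have "\<dots> \<le> (\<Sum>j<n. if j \<in> S then h j 0 * katz W \<gamma> $ j else 0)"
    proof (intro sum_mono)
      fix j assume j: "j \<in> {..<n}"
      have b: "l j 0 * z j \<le> x j" "x j \<le> h j 0 * z j" using fe j unfolding gip_feasible_def by auto
      show "katz W \<gamma> $ j * x j \<le> (if j \<in> S then h j 0 * katz W \<gamma> $ j else 0)"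
      proof (cases "j \<in> S")
        case True
        then have "z j = 1" unfolding S_def by auto
        then show ?thesis using True b c0[of j] j by (simp add: mult.commute mult_right_mono)
      next
        case False
        then have "z j = 0" using z01 j unfolding S_def by auto
        then show ?thesis using False b by simp
      qed
    qed
    also have "\<dots> = (\<Sum>j\<in>S. h j 0 * katz W \<gamma> $ j)"
      using sum_if_subset[OF SS] .
    also have "\<dots> \<le> (\<Sum>j\<in>A. h j 0 * katz W \<gamma> $ j)"
    proof (rule exchange[OF finA finS cS])
      show "\<forall>x\<in>A \<union> S. 0 \<le> h x 0 * katz W \<gamma> $ x"
      proof
        fix y assume y: "y \<in> A \<union> S"
        then have "y < n" using A(1) SS by auto
        then show "0 \<le> h y 0 * katz W \<gamma> $ y"
          using c0 bounds[rule_format, of y 0] by (intro mult_nonneg_nonneg) auto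
      qed
      show "\<forall>i\<in>S - A. \<forall>j\<in>A - S. h i 0 * katz W \<gamma> $ i \<le> h j 0 * katz W \<gamma> $ j"
        using A_top SS by auto
    qed
    finally show ?thesis using sxs by simp
  qed
  show ?thesis
    using P1 P2 score feas_x unfolding xs_def by blast
qed

end
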